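(* Let $\mathcal{H}$ be a real Hilbert space, $A_1,A_2:\mathcal{H}\rightrightarrows\mathcal{H}$ maximally monotone, $\Gamma\subseteq\mathbb{R}_{++}$ a nonempty closed interval, $T_\gamma:=\mathrm{Id}-J_{\gamma A_1}+J_{\gamma A_2}(2J_{\gamma A_1}-\mathrm{Id})$ for $\gamma\in\Gamma$, and $\mathcal{Q}_{\delta\leftarrow\gamma}x:=\frac{\delta}{\gamma}x+\big(1-\frac{\delta}{\gamma}\big)J_{\gamma A_1}x$ for $\delta,\gamma\in\mathbb{R}_{++}$, $x\in\mathcal{H}$. Then for any nonempty bounded set $S\subseteq\bigcup_{\gamma\in\Gamma}(\operatorname{Fix}T_\gamma\times\{\gamma\})$ there exists $L\ge0$ such that $\|\mathcal{Q}_{\delta\leftarrow\gamma}x-\mathcal{Q}_{\gamma\leftarrow\gamma}x\|\le L|\delta-\gamma|$ for all $\delta\in\Gamma$ and all $(x,\gamma)\in S$.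
   Context: $J_A=(\mathrm{Id}+A)^{-1}$ is the resolvent of $A$; $\operatorname{Fix}T=\{x:Tx=x\}$. *)

theory Defs
  imports "HOL-Analysis.Analysis"
begin

definition mono_op :: "('a::real_inner \<Rightarrow> 'a set) \<Rightarrow> bool" where
  "mono_op A \<longleftrightarrow> (\<forall>x y u v. u \<in> A x \<longrightarrow> v \<in> A y \<longrightarrow> inner (x - y) (u - v) \<ge> 0)"

definition max_mono_op :: "('a::real_inner \<Rightarrow> 'a set) \<Rightarrow> bool" where
  "max_mono_op A \<longleftrightarrow> mono_op A \<and>
     (\<forall>B. mono_op B \<and> (\<forall>x. A x \<subseteq> B x) \<longrightarrow> B = A)"

definition scale_op :: "real \<Rightarrow> ('a::real_vector \<Rightarrow> 'a set) \<Rightarrow> 'a \<Rightarrow> 'a set" where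
  "scale_op g A = (\<lambda>x. scaleR g ` A x)"

text \<open>Resolvent J_A = (Id + A)^{-1}: J_A x is the (unique, for maximally monotone A)
  point p with x \<in> p + A p.\<close>
definition resolvent :: "('a::real_vector \<Rightarrow> 'a set) \<Rightarrow> 'a \<Rightarrow> 'a" where
  "resolvent A x = (THE p. x - p \<in> A p)"

definition fixpoints :: "('a \<Rightarrow> 'a) \<Rightarrow> 'a set" where
  "fixpoints T = {x. T x = x}"

definition DR_op :: "('a::real_vector \<Rightarrow> 'a set) \<Rightarrow> ('a \<Rightarrow> 'a set) \<Rightarrow> real \<Rightarrow> 'a \<Rightarrow> 'a" where
  "DR_op A1 A2 g x =
     x - resolvent (scale_op g A1) x
       + resolvent (scale_op g A2) (2 *\<^sub>R resolvent (scale_op g A1) x - x)"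

definition Q_op :: "('a::real_vector \<Rightarrow> 'a set) \<Rightarrow> real \<Rightarrow> real \<Rightarrow> 'a \<Rightarrow> 'a" where
  "Q_op A1 d g x = (d / g) *\<^sub>R x + (1 - d / g) *\<^sub>R resolvent (scale_op g A1) x"

end

theory Submission
  imports Defs
begin

lemma norm_comb_sq:
  fixes x y :: "'a::real_inner"
  shows "(norm ((1 - s) *\<^sub>R x + s *\<^sub>R y))^2
       = (1 - s) * (norm x)^2 + s * (norm y)^2 - s * (1 - s) * (norm (x - y))^2"
  unfolding power2_norm_eq_inner
  by (simp add: inner_add_left inner_add_right inner_diff_left inner_diff_right inner_commute algebra_simps)

lemma minty_core:
  fixes G :: "('a::{real_inner,complete_space} \<times> 'a) set"
  assumes mono: "\<And>a b c d. (a,b)\<in>G \<Longrightarrow> (c,d)\<in>G \<Longrightarrow> inner (a-c) (b-d) \<ge> 0"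
  and maxi: "\<And>x u. (\<And>a b. (a,b)\<in>G \<Longrightarrow> inner (x-a) (u-b) \<ge> 0) \<Longrightarrow> (x,u)\<in>G"
  and ne: "G \<noteq> {}"
  shows "\<exists>p. (p, -p) \<in> G"
proof -
  define l where "l a b x u = inner x b + inner a u - inner a b" for a b x u :: 'a
  define P where "P x u t \<longleftrightarrow> (\<forall>(a,b)\<in>G. l a b x u + ((norm x)^2 + (norm u)^2)/2 \<le> t)" for x u t
  have F1: "\<exists>(a,b)\<in>G. l a b x u \<ge> inner x u" for x u
  proof (rule ccontr)
    assume "\<not> ?thesis"
    hence lt: "\<And>a b. (a,b)\<in>G \<Longrightarrow> l a b x u < inner x u" by auto
    have "(x,u)\<in>G"
    proof (rule maxi)
      fix a b assume "(a,b)\<in>G"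
      from lt[OF this] show "inner (x-a) (u-b) \<ge> 0"
        by (simp add: l_def inner_diff_left inner_diff_right inner_commute)
    qed
    from lt[OF this] show False by (simp add: l_def)
  qed
  have F2: "P a b (inner a b + ((norm a)^2 + (norm b)^2)/2)" if "(a,b)\<in>G" for a b
    unfolding P_def
  proof (clarify)
    fix c d assume "(c,d)\<in>G"
    from mono[OF that this] show "l c d a b + ((norm a)^2 + (norm b)^2)/2 \<le> inner a b + ((norm a)^2 + (norm b)^2)/2"
      by (simp add: l_def inner_diff_left inner_diff_right inner_commute)
  qed
  have F3: "t \<ge> (norm (x+u))^2/2" if "P x u t" for x u t
  proof -
    obtain a b where ab: "(a,b)\<in>G" "l a b x u \<ge> inner x u" using F1 by blast
    with that have "inner x u + ((norm x)^2 + (norm u)^2)/2 \<le> t" unfolding P_def by fastforce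
    moreover have "(norm (x+u))^2 = (norm x)^2 + (norm u)^2 + 2 * inner x u"
      unfolding power2_norm_eq_inner by (simp add: inner_add_left inner_add_right inner_commute)
    ultimately show ?thesis by (simp add: field_simps)
  qed
  have conv: "P ((1-s) *\<^sub>R x + s *\<^sub>R y) ((1-s) *\<^sub>R u + s *\<^sub>R v)
      ((1-s)*t + s*r - s*(1-s)*((norm (x-y))^2 + (norm (u-v))^2)/2)"
    if "P x u t" "P y v r" "0 \<le> s" "s \<le> 1" for x u t y v r s
    unfolding P_def
  proof (clarify)
    fix a b assume ab: "(a,b)\<in>G"
    have 1: "l a b x u + ((norm x)^2 + (norm u)^2)/2 \<le> t" using that(1) ab unfolding P_def by fastforce
    have 2: "l a b y v + ((norm y)^2 + (norm v)^2)/2 \<le> r" using that(2) ab unfolding P_def by fastforce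
    have lin: "l a b ((1-s) *\<^sub>R x + s *\<^sub>R y) ((1-s) *\<^sub>R u + s *\<^sub>R v) = (1-s) * l a b x u + s * l a b y v"
      by (simp add: l_def inner_add_left inner_add_right algebra_simps)
    have "(1-s) * (l a b x u + ((norm x)^2 + (norm u)^2)/2) + s * (l a b y v + ((norm y)^2 + (norm v)^2)/2) \<le> (1-s)*t + s*r"
      using 1 2 that(3,4) by (simp add: add_mono mult_left_mono)
    moreover have "l a b ((1-s) *\<^sub>R x + s *\<^sub>R y) ((1-s) *\<^sub>R u + s *\<^sub>R v) +
       ((norm ((1-s) *\<^sub>R x + s *\<^sub>R y))^2 + (norm ((1-s) *\<^sub>R u + s *\<^sub>R v))^2)/2
       = (1-s) * (l a b x u + ((norm x)^2 + (norm u)^2)/2) + s * (l a b y v + ((norm y)^2 + (norm v)^2)/2)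
         - s*(1-s)*((norm (x-y))^2 + (norm (u-v))^2)/2"
      unfolding lin norm_comb_sq by (simp add: field_simps)
    ultimately show "l a b ((1-s) *\<^sub>R x + s *\<^sub>R y) ((1-s) *\<^sub>R u + s *\<^sub>R v) +
       ((norm ((1-s) *\<^sub>R x + s *\<^sub>R y))^2 + (norm ((1-s) *\<^sub>R u + s *\<^sub>R v))^2)/2
       \<le> (1-s)*t + s*r - s*(1-s)*((norm (x-y))^2 + (norm (u-v))^2)/2"
      by linarith
  qed
  define Ts where "Ts = {t. \<exists>x u. P x u t}"
  define m where "m = Inf Ts"
  obtain a0 b0 where ab0: "(a0,b0)\<in>G" using ne by auto
  have Tsne: "Ts \<noteq> {}" using F2[OF ab0] unfolding Ts_def by blast
  have Tsbdd: "bdd_below Ts" unfolding Ts_def bdd_below_def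
    by (rule exI[of _ 0]) (auto dest!: F3 intro: order_trans[rotated])
  have mle: "m \<le> t" if "P x u t" for x u t
    unfolding m_def using Tsbdd that by (auto intro: cInf_lower simp: Ts_def)
  have "\<exists>x u t. P x u t \<and> t < m + 1/(Suc n)" for n :: nat
  proof -
    have "Inf Ts < m + 1/(Suc n)" unfolding m_def by simp
    from cInf_lessD[OF Tsne this] show ?thesis unfolding Ts_def by auto
  qed
  then obtain X U T where XUT: "\<And>n. P (X n) (U n) (T n)" "\<And>n. T n < m + 1/(Suc n)"
    by metis
  have cau: "(norm (X n - X k))^2 + (norm (U n - U k))^2 \<le> 4 * (1/Suc n + 1/Suc k)" for n k
  proof -
    from mle[OF conv[OF XUT(1)[of n] XUT(1)[of k], of "1/2"]]
    have "m \<le> T n / 2 + T k / 2 - ((norm (X n - X k))^2 + (norm (U n - U k))^2)/8" by simp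
    with XUT(2)[of n] XUT(2)[of k] show ?thesis by argo
  qed
  have small: "(norm (X n - X k))^2 < e^2 \<and> (norm (U n - U k))^2 < e^2"
    if "n \<ge> N" "k \<ge> N" "8 / e^2 < real N" "e > 0" for n k N and e :: real
  proof -
    have "1/real (Suc n) \<le> 1/real (Suc N)" "1/real (Suc k) \<le> 1/real (Suc N)"
      using that by (auto intro!: divide_left_mono)
    moreover have "8 / real (Suc N) < e^2"
      using that(3,4) by (simp add: field_simps add_pos_pos add.commute less_add_same_cancel2 order.strict_trans2[OF _ le_add_same_cancel2[THEN iffD2]])
    ultimately have "4 * (1/real (Suc n) + 1/real (Suc k)) < e^2" by argo
    with cau[of n k] zero_le_power2[of "norm (X n - X k)"] zero_le_power2[of "norm (U n - U k)"]
    show ?thesis by argo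
  qed
  have CX: "Cauchy X" "Cauchy U"
  proof -
    have "\<exists>M. \<forall>n\<ge>M. \<forall>k\<ge>M. dist (X n) (X k) < e \<and> dist (U n) (U k) < e" if "e > 0" for e :: real
    proof -
      obtain N :: nat where N: "8 / e^2 < real N" using reals_Archimedean2 by blast
      show ?thesis
      proof (intro exI allI impI)
        fix n k assume "N \<le> n" "N \<le> k"
        from small[OF this N \<open>e>0\<close>] \<open>e>0\<close> show "dist (X n) (X k) < e \<and> dist (U n) (U k) < e"
          by (simp add: dist_norm) (meson power2_less_imp_less less_imp_le)
      qed
    qed
    then show "Cauchy X" "Cauchy U" unfolding Cauchy_def by meson+
  qed
  then obtain x0 u0 where lim: "X \<longlonglongrightarrow> x0" "U \<longlonglongrightarrow> u0"
    using Cauchy_convergent_iff convergent_def by metis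
  have limT: "T \<longlonglongrightarrow> m"
  proof (rule tendsto_sandwich[where f="\<lambda>n. m" and h="\<lambda>n. m + inverse (real (Suc n))"])
    show "\<forall>\<^sub>F n in sequentially. m \<le> T n" using mle[OF XUT(1)] by simp
    show "\<forall>\<^sub>F n in sequentially. T n \<le> m + inverse (real (Suc n))"
      using XUT(2) by (simp add: less_imp_le inverse_eq_divide)
    show "(\<lambda>n. m) \<longlonglongrightarrow> m" by simp
    have "(\<lambda>n. m + inverse (real (Suc n))) \<longlonglongrightarrow> m + 0"
      by (intro tendsto_intros LIMSEQ_inverse_real_of_nat)
    then show "(\<lambda>n. m + inverse (real (Suc n))) \<longlonglongrightarrow> m" by simp
  qed
  have P0: "P x0 u0 m"
    unfolding P_def
  proof (clarify)
    fix a b assume ab: "(a,b)\<in>G"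
    have "(\<lambda>n. l a b (X n) (U n) + ((norm (X n))^2 + (norm (U n))^2)/2) \<longlonglongrightarrow> l a b x0 u0 + ((norm x0)^2 + (norm u0)^2)/2"
      unfolding l_def by (auto intro!: tendsto_intros lim)
    moreover have "\<forall>n. l a b (X n) (U n) + ((norm (X n))^2 + (norm (U n))^2)/2 \<le> T n"
      using XUT(1) ab unfolding P_def by fastforce
    ultimately show "l a b x0 u0 + ((norm x0)^2 + (norm u0)^2)/2 \<le> m"
      using limT by (meson LIMSEQ_le)
  qed
  have var: "m + ((norm (x - x0))^2 + (norm (u - u0))^2)/2 \<le> t" if Pt: "P x u t" for x u t
  proof (rule ccontr)
    define D where "D = (norm (x - x0))^2 + (norm (u - u0))^2"
    assume "\<not> ?thesis"
    hence e: "m + D/2 - t > 0" unfolding D_def by simp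
    have Dpos: "D > 0" using e mle[OF Pt] by simp
    define s where "s = min (1/2) ((m + D/2 - t) / D)"
    have s: "0 < s" "s \<le> 1/2" "s * D \<le> m + D/2 - t"
      using e Dpos by (auto simp: s_def min_def field_simps)
    from mle[OF conv[OF P0 Pt, of s]] s
    have "m \<le> (1-s)*m + s*t - s*(1-s)*D/2" by (simp add: D_def norm_minus_commute)
    hence "s * m \<le> s * (t - (1-s)*D/2)" by (simp add: algebra_simps)
    hence "m \<le> t - (1-s)*D/2" using s by simp
    moreover have "(1-s)*D/2 = D/2 - s*D/2" by (simp add: field_simps)
    ultimately show False using s e by argo
  qed
  have nd: "(norm (p - q))^2 = (norm p)^2 - 2 * inner p q + (norm q)^2" for p q :: 'a
    unfolding power2_norm_eq_inner by (simp add: inner_diff_left inner_diff_right inner_commute)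
  have ns: "(norm (p + q))^2 = (norm p)^2 + 2 * inner p q + (norm q)^2" for p q :: 'a
    unfolding power2_norm_eq_inner by (simp add: inner_add_left inner_add_right inner_commute)
  have star: "inner a b + inner a x0 + inner b u0 \<ge> m + ((norm x0)^2 + (norm u0)^2)/2"
    if "(a,b)\<in>G" for a b
    using var[OF F2[OF that]] nd[of a x0] nd[of b u0] by argo
  obtain a b where ab: "(a,b)\<in>G" "l a b (-u0) (-x0) \<ge> inner (-u0) (-x0)"
    using F1 by blast
  have lab: "l a b (-u0) (-x0) = - inner u0 b - inner a x0 - inner a b"
    unfolding l_def by simp
  have m0: "m \<ge> (norm (x0+u0))^2/2" using F3[OF P0] .
  have "(norm (x0+u0))^2 \<le> 0"
    using star[OF ab(1)] ab(2) lab m0 ns[of x0 u0] by (simp add: inner_commute) argo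
  hence "x0 + u0 = 0" by simp
  hence u0: "u0 = - x0" by (simp add: add_eq_0_iff2)
  have "(x0, -x0) \<in> G"
  proof (rule maxi)
    fix c d assume cd: "(c,d)\<in>G"
    have "m \<le> 0"
      using star[OF ab(1)] ab(2) lab u0 by (simp add: inner_commute power2_norm_eq_inner)
    moreover have "m \<ge> 0" using m0 zero_le_power2[of "norm (x0+u0)"] by argo
    ultimately have "m = 0" by simp
    with star[OF cd] u0 show "0 \<le> inner (x0 - c) (- x0 - d)"
      by (simp add: inner_diff_left inner_diff_right inner_commute power2_norm_eq_inner)
  qed
  then show ?thesis by blast
qed

lemma mm_mono:
  assumes "max_mono_op A" "u \<in> A x" "v \<in> A y"
  shows "inner (x - y) (u - v) \<ge> 0"
  using assms unfolding max_mono_op_def mono_op_def by blast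

lemma mm_maxi:
  fixes A :: "'a::real_inner \<Rightarrow> 'a set"
  assumes mm: "max_mono_op A" and rel: "\<And>y v. v \<in> A y \<Longrightarrow> inner (x - y) (u - v) \<ge> 0"
  shows "u \<in> A x"
proof -
  define B where "B = A(x := insert u (A x))"
  have "mono_op B"
    unfolding mono_op_def
  proof (intro allI impI)
    fix x' y' u' v' assume h: "u' \<in> B x'" "v' \<in> B y'"
    have sym: "inner (p - q) (w - z) = inner (q - p) (z - w)" for p q w z :: 'a
      by (simp add: inner_diff_left inner_diff_right inner_commute)
    show "inner (x' - y') (u' - v') \<ge> 0"
    proof (cases "x' = x \<and> u' = u")
      case True
      show ?thesis
      proof (cases "y' = x \<and> v' = u")
        case True with \<open>x' = x \<and> u' = u\<close> show ?thesis by simp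
      next
        case False
        then have "v' \<in> A y'" using h(2) by (auto simp: B_def split: if_splits)
        with rel True show ?thesis by blast
      qed
    next
      case False
      then have xa: "u' \<in> A x'" using h(1) by (auto simp: B_def split: if_splits)
      show ?thesis
      proof (cases "y' = x \<and> v' = u")
        case True
        with rel[OF xa] sym[of x x' u u'] show ?thesis by simp
      next
        case False
        then have "v' \<in> A y'" using h(2) by (auto simp: B_def split: if_splits)
        with xa mm_mono[OF mm] show ?thesis by blast
      qed
    qed
  qed
  moreover have "\<forall>z. A z \<subseteq> B z" by (auto simp: B_def)
  ultimately have "B = A" using mm unfolding max_mono_op_def by blast
  then show ?thesis by (metis B_def fun_upd_same insertI1)
qed

lemma mm_nonempty:
  fixes A :: "'a::real_inner \<Rightarrow> 'a set"
  assumes mm: "max_mono_op A"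
  shows "\<exists>x u. u \<in> A x"
proof (rule ccontr)
  assume "\<not> ?thesis"
  hence "\<And>y v. v \<in> A y \<Longrightarrow> inner (0 - y) (0 - v) \<ge> 0" by blast
  from mm_maxi[OF mm this] \<open>\<not> ?thesis\<close> show False by blast
qed

lemma resolvent_char:
  fixes A :: "'a::{real_inner,complete_space} \<Rightarrow> 'a set"
  assumes mm: "max_mono_op A" and g: "g > 0"
  shows "\<exists>b\<in>A (resolvent (scale_op g A) x). x - resolvent (scale_op g A) x = g *\<^sub>R b"
proof -
  define G where "G = {(a, g *\<^sub>R b - x) | a b. b \<in> A a}"
  have "\<exists>p. (p, -p) \<in> G"
  proof (rule minty_core)
    fix a b c d assume "(a,b)\<in>G" "(c,d)\<in>G"
    then obtain b' d' where "b' \<in> A a" "b = g *\<^sub>R b' - x" "d' \<in> A c" "d = g *\<^sub>R d' - x"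
      unfolding G_def by blast
    moreover have "inner (a - c) (b' - d') \<ge> 0" using mm_mono[OF mm] calculation by blast
    ultimately show "inner (a - c) (b - d) \<ge> 0"
      using g by (simp add: scaleR_diff_right[symmetric])
  next
    fix y w assume h: "\<And>a b. (a,b)\<in>G \<Longrightarrow> inner (y - a) (w - b) \<ge> 0"
    have "(1/g) *\<^sub>R (w + x) \<in> A y"
    proof (rule mm_maxi[OF mm])
      fix a v assume "v \<in> A a"
      hence "(a, g *\<^sub>R v - x) \<in> G" unfolding G_def by blast
      from h[OF this] have "0 \<le> inner (y - a) (w - (g *\<^sub>R v - x))" .
      also have "w - (g *\<^sub>R v - x) = g *\<^sub>R ((1/g) *\<^sub>R (w + x) - v)"
        using g by (simp add: algebra_simps)
      finally show "0 \<le> inner (y - a) ((1/g) *\<^sub>R (w + x) - v)"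
        using g by (simp add: zero_le_mult_iff)
    qed
    moreover have "w = g *\<^sub>R ((1/g) *\<^sub>R (w + x)) - x" using g by simp
    ultimately show "(y, w) \<in> G" unfolding G_def by blast
  next
    obtain a u where "u \<in> A a" using mm_nonempty[OF mm] by blast
    then show "G \<noteq> {}" unfolding G_def by blast
  qed
  then obtain p b where pb: "b \<in> A p" "g *\<^sub>R b - x = - p" unfolding G_def by fastforce
  have xp: "x - p = g *\<^sub>R b"
  proof -
    have "x - p = x + (g *\<^sub>R b - x)" using pb(2) by simp
    then show ?thesis by simp
  qed
  have ex: "x - p \<in> scale_op g A p" unfolding scale_op_def using pb(1) xp by blast
  have uniq: "q = p" if hq: "x - q \<in> scale_op g A q" for q
  proof -
    obtain c where c: "c \<in> A q" "x - q = g *\<^sub>R c" using hq unfolding scale_op_def by blast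
    have "0 \<le> inner (q - p) (c - b)" using mm_mono[OF mm c(1) pb(1)] .
    hence "0 \<le> g * inner (q - p) (c - b)" using g by simp
    also have "g * inner (q - p) (c - b) = inner (q - p) (g *\<^sub>R c - g *\<^sub>R b)"
      by (simp add: inner_diff_right right_diff_distrib)
    also have "g *\<^sub>R c - g *\<^sub>R b = (x - q) - (x - p)" using c(2) xp by simp
    also have "(x - q) - (x - p) = p - q" by simp
    finally have "inner (q - p) (q - p) \<le> 0"
      by (metis inner_minus_right minus_diff_eq neg_0_le_iff_le)
    then show "q = p" using inner_ge_zero[of "q - p"] by (simp add: order_antisym)
  qed
  have "resolvent (scale_op g A) x = p"
    unfolding resolvent_def by (rule the_equality[where P="\<lambda>q. x - q \<in> scale_op g A q", OF ex uniq])
  then show ?thesis using pb(1) xp by auto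
qed


lemma res_bound:
  fixes A :: "'a::{real_inner,complete_space} \<Rightarrow> 'a set"
  assumes mm: "max_mono_op A" and g: "g > 0" and ab0: "b0 \<in> A a0"
  shows "norm (x - resolvent (scale_op g A) x) \<le> 2 * norm x + 2 * norm a0 + 3 * g * norm b0"
proof -
  define p where "p = resolvent (scale_op g A) x"
  obtain b where b: "b \<in> A p" "x - p = g *\<^sub>R b"
    using resolvent_char[OF mm g, of x] unfolding p_def by blast
  define d where "d = p - a0"
  define w where "w = x - a0 - g *\<^sub>R b0"
  have "0 \<le> inner (p - a0) (b - b0)" using mm_mono[OF mm b(1) ab0] .
  hence "0 \<le> g * inner d (b - b0)" using g by (simp add: d_def)
  also have "g * inner d (b - b0) = inner d (g *\<^sub>R b - g *\<^sub>R b0)"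
    by (simp add: inner_diff_right right_diff_distrib)
  also have "g *\<^sub>R b - g *\<^sub>R b0 = w - d" using b(2) by (simp add: w_def d_def algebra_simps)
  finally have "inner d d \<le> inner d w" by (simp add: inner_diff_right)
  also have "\<dots> \<le> norm d * norm w" by (rule norm_cauchy_schwarz)
  finally have dd: "norm d * norm d \<le> norm d * norm w" by (simp add: power2_eq_square[symmetric] power2_norm_eq_inner[symmetric])
  have dw: "norm d \<le> norm w"
  proof (cases "norm d = 0")
    case True then show ?thesis by simp
  next
    case False then show ?thesis using dd by (simp add: mult_le_cancel_left)
  qed
  have "x - p = w - d + g *\<^sub>R b0" by (simp add: w_def d_def)
  hence "norm (x - p) \<le> norm w + norm d + g * norm b0"
    using g norm_triangle_ineq[of "w - d" "g *\<^sub>R b0"] norm_triangle_ineq4[of w d] by simp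
  moreover have "norm w \<le> norm x + norm a0 + g * norm b0"
    unfolding w_def using g norm_triangle_ineq4[of "x - a0" "g *\<^sub>R b0"] norm_triangle_ineq4[of x a0] by simp
  ultimately show ?thesis using dw g unfolding p_def by simp
qed


theorem lemma4p1:
  fixes A1 A2 :: "'a::{real_inner, complete_space} \<Rightarrow> 'a set"
    and \<Gamma> :: "real set"
    and S :: "('a \<times> real) set"
  assumes "max_mono_op A1" and "max_mono_op A2"
    and "\<Gamma> \<noteq> {}" and "\<Gamma> \<subseteq> {0<..}" and "closed \<Gamma>" and "is_interval \<Gamma>"
    and "S \<noteq> {}" and "bounded S"
    and "S \<subseteq> (\<Union>\<gamma>\<in>\<Gamma>. fixpoints (DR_op A1 A2 \<gamma>) \<times> {\<gamma>})"
  shows "\<exists>L\<ge>0. \<forall>\<delta>\<in>\<Gamma>. \<forall>(x, \<gamma>)\<in>S.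
           norm (Q_op A1 \<delta> \<gamma> x - Q_op A1 \<gamma> \<gamma> x) \<le> L * \<bar>\<delta> - \<gamma>\<bar>"
proof -
  obtain a0 b0 where ab0: "b0 \<in> A1 a0" using mm_nonempty[OF assms(1)] by blast
  obtain R where R: "\<And>z. z \<in> S \<Longrightarrow> norm z \<le> R" using assms(8) unfolding bounded_iff by blast
  obtain z0 where "z0 \<in> S" using assms(7) by blast
  hence R0: "R \<ge> 0" using R[of z0] norm_ge_zero[of z0] by linarith
  have bdd: "bdd_below \<Gamma>" using assms(4) unfolding bdd_below_def by (intro exI[of _ 0]) auto
  define m0 where "m0 = Inf \<Gamma>"
  have m0G: "m0 \<in> \<Gamma>" unfolding m0_def using closed_contains_Inf[OF assms(3) bdd assms(5)] .
  hence m0pos: "m0 > 0" using assms(4) by auto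
  have lower: "m0 \<le> g" if "g \<in> \<Gamma>" for g unfolding m0_def using bdd that by (rule cInf_lower[rotated])
  define L where "L = (2 * R + 2 * norm a0) / m0 + 3 * norm b0"
  have L0: "L \<ge> 0" unfolding L_def using R0 m0pos by simp
  have main: "norm (Q_op A1 d g x - Q_op A1 g g x) \<le> L * \<bar>d - g\<bar>" if "d \<in> \<Gamma>" "(x, g) \<in> S" for d g x
  proof -
    have gG: "g \<in> \<Gamma>" using assms(9) that(2) by auto
    hence gpos: "g > 0" and mg: "m0 \<le> g" using assms(4) lower by auto
    have xR: "norm x \<le> R" using R[OF that(2)] norm_fst_le[of x g] by linarith
    define J where "J = resolvent (scale_op g A1) x"
    have N: "norm (x - J) \<le> 2 * norm x + 2 * norm a0 + 3 * g * norm b0"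
      unfolding J_def by (rule res_bound[OF assms(1) gpos ab0])
    have "Q_op A1 d g x - Q_op A1 g g x = ((d - g) / g) *\<^sub>R (x - J)"
      using gpos unfolding Q_op_def J_def[symmetric] by (simp add: algebra_simps diff_divide_distrib)
    hence "norm (Q_op A1 d g x - Q_op A1 g g x) = (\<bar>d - g\<bar> / g) * norm (x - J)"
      using gpos by simp
    also have "\<dots> \<le> (\<bar>d - g\<bar> / g) * (2 * norm x + 2 * norm a0 + 3 * g * norm b0)"
      using N gpos by (intro mult_left_mono) auto
    also have "\<dots> = \<bar>d - g\<bar> * ((2 * norm x + 2 * norm a0) / g + 3 * norm b0)"
      using gpos by (simp add: field_simps)
    also have "\<dots> \<le> \<bar>d - g\<bar> * L"
    proof (intro mult_left_mono)
      have "(2 * norm x + 2 * norm a0) / g \<le> (2 * R + 2 * norm a0) / g"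
        using xR gpos by (intro divide_right_mono) auto
      also have "\<dots> \<le> (2 * R + 2 * norm a0) / m0"
        using R0 m0pos mg by (intro divide_left_mono) auto
      finally show "(2 * norm x + 2 * norm a0) / g + 3 * norm b0 \<le> L" unfolding L_def by simp
    qed simp
    finally show ?thesis by (simp add: mult.commute)
  qed
  show ?thesis using L0 main by blast
qed

end
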